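(* Let $U\subseteq F^d$ be open, $\mathbf x_0\in U$, $f=(f_1,\dots,f_n):U\to F^n$ satisfy (II), (III), (IV) and $\theta:U\to F$ satisfy (VI). Then for every sufficiently small neighbourhood $V\subseteq U$ of $\mathbf x_0$ there exists $M_0>1$ such that $$\inf_{(\mathbf a,a_0)\in F^{n}\times F,\ \|\mathbf a\|\ge M_0}\ \sup_{\mathbf x\in V}|a_0+\mathbf a\cdot f(\mathbf x)+\theta(\mathbf x)|>0.$$
   Context: $F=\mathbb F_q((X^{-1}))$ with $|a|=q^{\deg a}$, sup norm on $F^k$. Difference quotients $\Phi_\beta$ with continuous extensions $\bar\Phi_\beta$ ($\Phi^kg(x_1,\dots,x_{k+1})=\frac{\Phi^{k-1}g(x_1,x_3,\dots)-\Phi^{k-1}g(x_2,x_3,\dots)}{x_1-x_2}$, iterated per variable). (II) $f$ analytic, extends analytically to the boundary of $U$, $f_1(\mathbf x)=x_1$. (III) $1,f_1,\dots,f_n$ restricted to any open subset of $U$ are linearly independent over $F$. (IV) $\|f\|\le1$, $\|\nabla f\|\le1$, $\|\bar\Phi_\beta f(\cdot)\|\le1$ for all $|\beta|=2$. (VI) $\theta$ analytic, extends analytically to the boundary, $|\theta|\le1$, $\|\nabla\theta\|\le1$, $|\bar\Phi_\beta\theta(\cdot)|\le1$ for all $|\beta|=2$. *)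

theory Defs
  imports "HOL-Analysis.Analysis" "HOL-Computational_Algebra.Formal_Laurent_Series"
begin

text \<open>The local field F = F_q((X^{-1})) is modelled as the field of formal Laurent series
  'k fls over a finite field 'k (q = CARD('k)), via the isomorphism X \<mapsto> 1/T.
  Under it, deg a (highest X-exponent) = - fls_subdegree a, so |a| = q^deg a.\<close>

definition absF :: "'k::{field,finite} fls \<Rightarrow> real" where
  "absF a = (if a = 0 then 0 else real CARD('k) powr (- real_of_int (fls_subdegree a)))"

definition normv :: "('k::{field,finite} fls) ^ 'd \<Rightarrow> real" where
  "normv x = Max (range (\<lambda>i. absF (x $ i)))"

definition openF :: "(('k::{field,finite} fls) ^ 'd) set \<Rightarrow> bool" where
  "openF S \<longleftrightarrow> (\<forall>x\<in>S. \<exists>r>0. \<forall>y. normv (y - x) < r \<longrightarrow> y \<in> S)"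

definition closureF :: "(('k::{field,finite} fls) ^ 'd) set \<Rightarrow> (('k fls) ^ 'd) set" where
  "closureF S = {x. \<forall>e>0. \<exists>y\<in>S. normv (y - x) < e}"

definition has_sumF :: "('i \<Rightarrow> 'k::{field,finite} fls) \<Rightarrow> 'k fls \<Rightarrow> bool" where
  "has_sumF c s \<longleftrightarrow> (\<forall>e>0. \<exists>S0. finite S0 \<and>
      (\<forall>S. finite S \<and> S0 \<subseteq> S \<longrightarrow> absF (sum c S - s) < e))"

definition analyticF :: "(('k::{field,finite} fls) ^ 'd) set \<Rightarrow> (('k fls) ^ 'd \<Rightarrow> 'k fls) \<Rightarrow> bool" where
  "analyticF S g \<longleftrightarrow> (\<forall>x0\<in>S. \<exists>r>0. \<exists>c :: ('d \<Rightarrow> nat) \<Rightarrow> 'k fls.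
      \<forall>x. normv (x - x0) < r \<longrightarrow> x \<in> S \<and>
        has_sumF (\<lambda>\<alpha>. c \<alpha> * (\<Prod>i\<in>UNIV. (x $ i - x0 $ i) ^ (\<alpha> i))) (g x))"

definition analytic_to_boundary :: "(('k::{field,finite} fls) ^ 'd) set \<Rightarrow> (('k fls) ^ 'd \<Rightarrow> 'k fls) \<Rightarrow> bool" where
  "analytic_to_boundary U g \<longleftrightarrow> (\<exists>W h. openF W \<and> closureF U \<subseteq> W \<and> analyticF W h \<and>
      (\<forall>x\<in>U. h x = g x))"

definition has_partialF :: "(('k::{field,finite} fls) ^ 'd \<Rightarrow> 'k fls) \<Rightarrow> 'd \<Rightarrow> ('k fls) ^ 'd \<Rightarrow> 'k fls \<Rightarrow> bool" where
  "has_partialF g j x D \<longleftrightarrow> (\<forall>e>0. \<exists>\<delta>>0. \<forall>t. t \<noteq> 0 \<and> absF t < \<delta> \<longrightarrow>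
      absF ((g (x + axis j t) - g x) / t - D) < e)"

fun divdiff :: "('a::field \<Rightarrow> 'a) \<Rightarrow> 'a list \<Rightarrow> 'a" where
  "divdiff g [] = 0"
| "divdiff g [x] = g x"
| "divdiff g (x1 # x2 # xs) = (divdiff g (x1 # xs) - divdiff g (x2 # xs)) / (x1 - x2)"

text \<open>Difference quotient in the i-th variable (the i-th coordinate of the argument is ignored).\<close>
definition dq_var :: "'d \<Rightarrow> 'a::field list \<Rightarrow> ('a ^ 'd \<Rightarrow> 'a) \<Rightarrow> ('a ^ 'd \<Rightarrow> 'a)" where
  "dq_var i xs g = (\<lambda>y. divdiff (\<lambda>t. g (\<chi> k. if k = i then t else y $ k)) xs)"

fun Phi_list :: "'d list \<Rightarrow> ('d \<Rightarrow> 'a::field list) \<Rightarrow> ('a ^ 'd \<Rightarrow> 'a) \<Rightarrow> ('a ^ 'd \<Rightarrow> 'a)" where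
  "Phi_list [] L g = g"
| "Phi_list (i # is) L g = dq_var i (L i) (Phi_list is L g)"

definition var_enum :: "'d::finite list" where
  "var_enum = (SOME xs. distinct xs \<and> set xs = UNIV)"

text \<open>Phi_beta g, evaluated at the family L, where L i is the list of beta i + 1 values
  of the i-th variable (iterated difference quotients, one variable at a time).\<close>
definition PhiF :: "('d::finite \<Rightarrow> nat) \<Rightarrow> ('a::field ^ 'd \<Rightarrow> 'a) \<Rightarrow> ('d \<Rightarrow> 'a list) \<Rightarrow> 'a" where
  "PhiF \<beta> g L = Phi_list var_enum L g 0"

definition dq_dom_bar :: "(('k::{field,finite} fls) ^ 'd) set \<Rightarrow> ('d \<Rightarrow> nat) \<Rightarrow> ('d \<Rightarrow> 'k fls list) set" where
  "dq_dom_bar U \<beta> = {L. (\<forall>i. length (L i) = \<beta> i + 1) \<and> (\<forall>x. (\<forall>i. x $ i \<in> set (L i)) \<longrightarrow> x \<in> U)}"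

definition dq_dom :: "(('k::{field,finite} fls) ^ 'd) set \<Rightarrow> ('d \<Rightarrow> nat) \<Rightarrow> ('d \<Rightarrow> 'k fls list) set" where
  "dq_dom U \<beta> = {L \<in> dq_dom_bar U \<beta>. \<forall>i. distinct (L i)}"

definition dq_bar_bounded :: "(('k::{field,finite} fls) ^ 'd) set \<Rightarrow> ('d \<Rightarrow> nat) \<Rightarrow> (('k fls) ^ 'd \<Rightarrow> 'k fls) \<Rightarrow> bool" where
  "dq_bar_bounded U \<beta> g \<longleftrightarrow> (\<exists>\<Phi>b. (\<forall>L\<in>dq_dom U \<beta>. \<Phi>b L = PhiF \<beta> g L) \<and>
      (\<forall>L\<in>dq_dom_bar U \<beta>. \<forall>e>0. \<exists>\<delta>>0. \<forall>L'\<in>dq_dom_bar U \<beta>.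
          (\<forall>i k. k < length (L i) \<longrightarrow> absF (L i ! k - L' i ! k) < \<delta>) \<longrightarrow> absF (\<Phi>b L - \<Phi>b L') < e) \<and>
      (\<forall>L\<in>dq_dom_bar U \<beta>. absF (\<Phi>b L) \<le> 1))"

end

theory Submission
  imports Defs
begin


lemma q_gt1: "real CARD('k::{field,finite}) > 1"
proof -
  have "{0::'k, 1} \<subseteq> UNIV" by simp
  hence "card {0::'k,1} \<le> CARD('k)" by (intro card_mono) auto
  thus ?thesis by simp
qed

lemma absF_nonneg: "absF (a::'k::{field,finite} fls) \<ge> 0"
  unfolding absF_def by simp

lemma absF_0[simp]: "absF (0::'k::{field,finite} fls) = 0"
  unfolding absF_def by simp

lemma absF_eq0: "absF (a::'k::{field,finite} fls) = 0 \<longleftrightarrow> a = 0"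
  using q_gt1[where 'k='k] unfolding absF_def by auto

lemma absF_uminus[simp]: "absF (- (a::'k::{field,finite} fls)) = absF a"
  unfolding absF_def by simp

lemma absF_mult: "absF ((a::'k::{field,finite} fls) * b) = absF a * absF b"
  using q_gt1[where 'k='k]
  unfolding absF_def by (auto simp: powr_add[symmetric] algebra_simps)

lemma absF_add_le: "absF ((a::'k::{field,finite} fls) + b) \<le> max (absF a) (absF b)"
proof (cases "a = 0 \<or> b = 0 \<or> a + b = 0")
  case True thus ?thesis using absF_nonneg[of a] absF_nonneg[of b] by auto
next
  case False
  hence ne: "a \<noteq> 0" "b \<noteq> 0" "a + b \<noteq> 0" by auto
  have s: "fls_subdegree (a+b) \<ge> min (fls_subdegree a) (fls_subdegree b)"
    using fls_plus_subdegree ne(3) by blast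
  define q where "q = real CARD('k)"
  have q: "q > 1" using q_gt1 q_def by simp
  have "q powr (- real_of_int (fls_subdegree (a+b))) \<le> max (q powr (- real_of_int (fls_subdegree a))) (q powr (- real_of_int (fls_subdegree b)))"
  proof (cases "fls_subdegree a \<le> fls_subdegree b")
    case True
    hence "fls_subdegree (a+b) \<ge> fls_subdegree a" using s by simp
    hence "q powr (- real_of_int (fls_subdegree (a+b))) \<le> q powr (- real_of_int (fls_subdegree a))"
      using q by (intro powr_mono) auto
    thus ?thesis by simp
  next
    case False
    hence "fls_subdegree (a+b) \<ge> fls_subdegree b" using s by simp
    hence "q powr (- real_of_int (fls_subdegree (a+b))) \<le> q powr (- real_of_int (fls_subdegree b))"
      using q by (intro powr_mono) auto
    thus ?thesis by simp
  qed
  thus ?thesis using ne unfolding absF_def q_def by simp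
qed

lemma absF_add_strict:
  assumes "absF (b::'k::{field,finite} fls) < absF a"
  shows "absF (a + b) = absF a"
proof -
  have "absF a \<le> max (absF (a+b)) (absF (-b))" using absF_add_le[of "a+b" "-b"] by simp
  hence "absF a \<le> absF (a+b)" using assms by auto
  moreover have "absF (a+b) \<le> absF a" using absF_add_le[of a b] assms by simp
  ultimately show ?thesis by simp
qed

lemma absF_sum_le:
  assumes "finite S" "\<forall>i\<in>S. absF (g i :: 'k::{field,finite} fls) \<le> M" "0 \<le> M"
  shows "absF (sum g S) \<le> M"
  using assms
proof (induction S rule: finite_induct)
  case empty thus ?case by simp
next
  case (insert x F)
  thus ?case using absF_add_le[of "g x" "sum g F"] by auto
qed

lemma absF_big: "\<exists>y::'k::{field,finite} fls. absF y > M"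
proof -
  define q where "q = real CARD('k)"
  have q: "q > 1" using q_gt1 q_def by simp
  obtain m where m: "M < q ^ m" using real_arch_pow[OF q] by blast
  have "(fls_X_inv :: 'k fls) ^ m \<noteq> 0" by simp
  hence "absF ((fls_X_inv :: 'k fls) ^ m) = q ^ m"
    unfolding absF_def q_def using q_gt1[where 'k='k] by (simp add: powr_realpow)
  thus ?thesis using m by metis
qed

lemma normv_ge: "absF (x $ i) \<le> normv x"
  unfolding normv_def by (intro Max_ge) auto

lemma normv_attained: "\<exists>i. normv x = absF (x $ i)"
proof -
  have "normv x \<in> range (\<lambda>i. absF (x $ i))" unfolding normv_def by (intro Max_in) auto
  thus ?thesis by auto
qed

lemma normv_nonneg: "normv x \<ge> 0"
  using normv_ge[of x undefined] absF_nonneg[of "x $ undefined"] by linarith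



definition dotK :: "'a::field ^'m::finite \<Rightarrow> 'a ^'m \<Rightarrow> 'a" where
  "dotK w v = (\<Sum>i\<in>UNIV. w $ i * v $ i)"

lemma dotK_diff: "dotK w (v - s *s u) = dotK w v - s * dotK w u"
  unfolding dotK_def by (simp add: algebra_simps sum_subtractf sum_distrib_left)

lemma dotK_add_axis: "dotK (w + c *s axis a 1) v = dotK w v + c * v $ a"
proof -
  have "(\<Sum>i\<in>UNIV. (c *s axis a 1) $ i * v $ i) = c * v $ a"
  proof -
    have "(\<Sum>i\<in>UNIV. (c *s axis a 1) $ i * v $ i) = (\<Sum>i\<in>UNIV. if i = a then c * v $ i else 0)"
      by (intro sum.cong) (auto simp: axis_def)
    thus ?thesis by simp
  qed
  thus ?thesis unfolding dotK_def by (simp add: algebra_simps sum.distrib)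
qed

lemma dotK_axis: "dotK (axis a 1) v = v $ a"
  using dotK_add_axis[of 0 1 a v] by (simp add: dotK_def)

lemma dotK_axis2: "dotK w (axis a 1) = w $ a"
proof -
  have "(\<Sum>i\<in>UNIV. w $ i * axis a 1 $ i) = (\<Sum>i\<in>UNIV. if i = a then w $ i else 0)"
    by (intro sum.cong) (auto simp: axis_def)
  thus ?thesis unfolding dotK_def by simp
qed

lemma dotK_sum: "dotK w (\<Sum>a\<in>T. r a *s a) = (\<Sum>a\<in>T. r a * dotK w a)"
proof -
  have "dotK w (\<Sum>a\<in>T. r a *s a) = (\<Sum>i\<in>UNIV. \<Sum>a\<in>T. w $ i * (r a * a $ i))"
    unfolding dotK_def by (simp add: sum_component sum_distrib_left)
  also have "\<dots> = (\<Sum>a\<in>T. \<Sum>i\<in>UNIV. w $ i * (r a * a $ i))" by (rule sum.swap)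
  also have "\<dots> = (\<Sum>a\<in>T. r a * dotK w a)"
    unfolding dotK_def by (simp add: sum_distrib_left algebra_simps)
  finally show ?thesis .
qed

lemma keyQ:
  fixes J :: "'m::finite set"
  assumes "finite J"
  shows "\<forall>E::('a::field^'m) set. (\<forall>w. (\<forall>i. i\<notin>J \<longrightarrow> w$i = 0) \<and> (\<forall>v\<in>E. dotK w v = 0) \<longrightarrow> w = 0)
     \<longrightarrow> (\<forall>k\<in>J. \<exists>y\<in>vec.span E. \<forall>i\<in>J. y$i = (if i = k then 1 else 0))"
  using assms
proof (induction J rule: finite_induct)
  case empty thus ?case by simp
next
  case (insert a J)
  show ?case
  proof (intro allI impI)
    fix E :: "('a^'m) set"
    assume H: "\<forall>w. (\<forall>i. i\<notin>insert a J \<longrightarrow> w$i = 0) \<and> (\<forall>v\<in>E. dotK w v = 0) \<longrightarrow> w = 0"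
    obtain u where uE: "u \<in> E" and ua: "u $ a \<noteq> 0"
    proof (rule ccontr)
      assume "\<not> thesis"
      hence "\<forall>v\<in>E. v $ a = 0" using that by blast
      moreover have "\<forall>i. i \<notin> insert a J \<longrightarrow> axis a (1::'a) $ i = 0" by (auto simp: axis_def)
      ultimately have "axis a (1::'a) = 0" using H[rule_format, of "axis a 1"] by (simp add: dotK_axis)
      thus False by (metis axis_nth zero_index one_neq_zero)
    qed
    define E' where "E' = (\<lambda>v. v - (v$a / u$a) *s u) ` E"
    have E'sp: "E' \<subseteq> vec.span E"
      unfolding E'_def using uE by (auto intro: vec.span_diff[OF vec.span_base vec.span_scale[OF vec.span_base]])
    have spE': "vec.span E' \<subseteq> vec.span E"
      by (rule vec.span_minimal[OF E'sp vec.subspace_span])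
    have sub: "vec.subspace {y::'a^'m. y $ a = 0}"
      by (rule vec.subspaceI) auto
    have E'a: "E' \<subseteq> {y. y $ a = 0}" unfolding E'_def using ua by auto
    have spa: "vec.span E' \<subseteq> {y. y $ a = 0}" by (rule vec.span_minimal[OF E'a sub])
    have H': "\<forall>w. (\<forall>i. i\<notin>J \<longrightarrow> w$i = 0) \<and> (\<forall>v\<in>E'. dotK w v = 0) \<longrightarrow> w = 0"
    proof (intro allI impI)
      fix w :: "'a^'m" assume A: "(\<forall>i. i\<notin>J \<longrightarrow> w$i = 0) \<and> (\<forall>v\<in>E'. dotK w v = 0)"
      define c where "c = - dotK w u / u $ a"
      define w2 where "w2 = w + c *s axis a 1"
      have "\<forall>v\<in>E. dotK w2 v = 0"
      proof
        fix v assume vE: "v \<in> E"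
        have "dotK w (v - (v$a / u$a) *s u) = 0" using A vE unfolding E'_def by auto
        hence "dotK w v = (v$a / u$a) * dotK w u" unfolding dotK_diff by simp
        thus "dotK w2 v = 0" unfolding w2_def dotK_add_axis c_def using ua by (simp add: field_simps)
      qed
      moreover have "\<forall>i. i\<notin>insert a J \<longrightarrow> w2$i = 0" using A unfolding w2_def by (auto simp: axis_def)
      ultimately have "w2 = 0" using H by blast
      moreover have "w $ a = 0" using A insert(2) by auto
      moreover have "w2 $ a = w $ a + c" unfolding w2_def by simp
      ultimately have "c = 0" by simp
      thus "w = 0" using \<open>w2 = 0\<close> unfolding w2_def by simp
    qed
    have IH: "\<forall>k\<in>J. \<exists>y\<in>vec.span E'. \<forall>i\<in>J. y$i = (if i = k then 1 else 0)"
      using insert.IH H' by blast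
    have IH2: "\<forall>k\<in>J. \<exists>y. y \<in> vec.span E' \<and> (\<forall>i\<in>J. y$i = (if i = k then 1 else 0))"
      using IH by blast
    from bchoice[OF IH2] obtain Y where Y: "\<forall>k\<in>J. Y k \<in> vec.span E' \<and> (\<forall>i\<in>J. Y k $ i = (if i = k then 1 else 0))"
      by blast
    have Ya: "\<forall>k\<in>J. Y k $ a = 0" using Y spa by blast
    show "\<forall>k\<in>insert a J. \<exists>y\<in>vec.span E. \<forall>i\<in>insert a J. y$i = (if i = k then 1 else 0)"
    proof
      fix k assume k: "k \<in> insert a J"
      show "\<exists>y\<in>vec.span E. \<forall>i\<in>insert a J. y$i = (if i = k then 1 else 0)"
      proof (cases "k = a")
        case False
        hence kJ: "k \<in> J" using k by simp
        show ?thesis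
          using Y kJ Ya spE' False by (intro bexI[of _ "Y k"]) auto
      next
        case True
        define y where "y = (1 / u$a) *s (u - (\<Sum>j\<in>J. u$j *s Y j))"
        have "y \<in> vec.span E" unfolding y_def
          using Y spE' uE by (intro vec.span_scale vec.span_diff vec.span_sum vec.span_base[OF uE]) auto
        moreover have "\<forall>i\<in>insert a J. y$i = (if i = k then 1 else 0)"
        proof
          fix i assume i: "i \<in> insert a J"
          have s: "(\<Sum>j\<in>J. u$j *s Y j) $ i = (\<Sum>j\<in>J. u$j * Y j $ i)" by (simp add: sum_component)
          show "y$i = (if i = k then 1 else 0)"
          proof (cases "i = a")
            case True
            thus ?thesis using s Ya ua \<open>k = a\<close> unfolding y_def by simp
          next
            case False
            hence iJ: "i \<in> J" using i by simp
            have "(\<Sum>j\<in>J. u$j * Y j $ i) = (\<Sum>j\<in>J. if j = i then u$i else 0)"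
              using Y iJ by (intro sum.cong) auto
            also have "\<dots> = u $ i" using iJ insert(1) by simp
            finally show ?thesis using s False \<open>k = a\<close> unfolding y_def by simp
          qed
        qed
        ultimately show ?thesis by blast
      qed
    qed
  qed
qed



lemma axis_in_span:
  fixes E :: "('a::field^'m::finite) set"
  assumes "\<forall>w. (\<forall>v\<in>E. dotK w v = 0) \<longrightarrow> w = 0"
  shows "axis k 1 \<in> vec.span E"
proof -
  obtain y where y: "y \<in> vec.span E" "\<forall>i. y$i = (if i = k then 1 else 0)"
  proof -
    have "\<forall>k\<in>UNIV. \<exists>y\<in>vec.span E. \<forall>i\<in>UNIV. y$i = (if i = k then 1 else 0)"
      using keyQ[of "UNIV::'m set", rule_format, of E] assms by simp
    thus ?thesis using that by blast
  qed
  have "y = axis k 1" using y(2) by (simp add: vec_eq_iff axis_def)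
  thus ?thesis using y(1) by simp
qed




lemma coord_bound:
  fixes E :: "('k::{field,finite} fls ^'m::finite) set"
  assumes H: "\<forall>w. (\<forall>v\<in>E. dotK w v = 0) \<longrightarrow> w = 0" and ne: "E \<noteq> {}"
  shows "\<exists>\<Lambda>>0. \<forall>w j. \<exists>v\<in>E. absF (w$j) \<le> \<Lambda> * absF (dotK w v)"
proof -
  have ex: "\<forall>j. \<exists>Tr. finite (fst Tr) \<and> fst Tr \<subseteq> E \<and> (\<Sum>a\<in>fst Tr. snd Tr a *s a) = axis j 1"
  proof
    fix j
    have "axis j 1 \<in> vec.span E" by (rule axis_in_span[OF H])
    hence "axis j 1 \<in> {(\<Sum>a\<in>t. r a *s  a) | t r. finite t \<and> t \<subseteq> E}"
      by (rule subst[OF vec.span_explicit[of E], where P="\<lambda>S. axis j 1 \<in> S"])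
    hence "\<exists>t r. axis j 1 = (\<Sum>a\<in>t. r a *s a) \<and> finite t \<and> t \<subseteq> E" by (simp only: mem_Collect_eq)
    then obtain t r where tr: "axis j 1 = (\<Sum>a\<in>t. r a *s a) \<and> finite t \<and> t \<subseteq> E" by (elim exE) (rule that)
    from tr have "finite t" "t \<subseteq> E" "(\<Sum>a\<in>t. r a *s a) = axis j 1" by simp_all
    thus "\<exists>Tr. finite (fst Tr) \<and> fst Tr \<subseteq> E \<and> (\<Sum>a\<in>fst Tr. snd Tr a *s a) = axis j 1"
      by (intro exI[of _ "(t, r)"]) simp
  qed
  obtain TR where TR: "\<forall>j. finite (fst (TR j)) \<and> fst (TR j) \<subseteq> E \<and> (\<Sum>a\<in>fst (TR j). snd (TR j) a *s a) = axis j 1"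
    using ex unfolding choice_iff by (elim exE) (rule that)
  define T where "T j = fst (TR j)" for j
  define r where "r j = snd (TR j)" for j
  have Tr: "\<And>j. finite (T j)" "\<And>j. T j \<subseteq> E" "\<And>j. (\<Sum>a\<in>T j. r j a *s a) = axis j 1"
    using TR unfolding T_def r_def by blast+
  define \<Lambda> where "\<Lambda> = 1 + (\<Sum>j\<in>UNIV. \<Sum>a\<in>T j. absF (r j a))"
  have sn: "\<And>j. (\<Sum>a\<in>T j. absF (r j a)) \<ge> 0" by (intro sum_nonneg) (rule absF_nonneg)
  have rle: "absF (r j a) \<le> \<Lambda>" if a: "a \<in> T j" for j a
  proof -
    have "absF (r j a) \<le> (\<Sum>a\<in>T j. absF (r j a))"
      using Tr(1)[of j] a absF_nonneg by (intro member_le_sum) 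
    also have "\<dots> \<le> (\<Sum>j\<in>UNIV. \<Sum>a\<in>T j. absF (r j a))"
      using sn by (intro member_le_sum) simp_all
    finally show "absF (r j a) \<le> \<Lambda>" unfolding \<Lambda>_def by simp
  qed
  have "0 \<le> (\<Sum>j\<in>UNIV. \<Sum>a\<in>T j. absF (r j a))" using sn by (simp add: sum_nonneg)
  hence Lpos: "\<Lambda> > 0" unfolding \<Lambda>_def by linarith
  have "\<forall>w j. \<exists>v\<in>E. absF (w$j) \<le> \<Lambda> * absF (dotK w v)"
  proof (intro allI)
    fix w :: "'k fls ^ 'm" and j
    have "w $ j = dotK w (\<Sum>a\<in>T j. r j a *s a)" using Tr(3)[of j] by (simp add: dotK_axis2)
    hence wj: "w $ j = (\<Sum>a\<in>T j. r j a * dotK w a)" by (simp only: dotK_sum)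
    show "\<exists>v\<in>E. absF (w$j) \<le> \<Lambda> * absF (dotK w v)"
    proof (cases "T j = {}")
      case True
      then obtain v where v: "v \<in> E" using ne by blast
      have "absF (w$j) = 0" using True wj by simp
      moreover have "0 \<le> \<Lambda> * absF (dotK w v)" using Lpos absF_nonneg[of "dotK w v"] by simp
      ultimately show ?thesis using v by auto
    next
      case False
      let ?g = "\<lambda>b. absF (dotK w b)"
      have fin: "finite (?g ` T j)" using Tr(1)[of j] by simp
      have "Max (?g ` T j) \<in> ?g ` T j" using fin False by (intro Max_in) auto
      then obtain a0 where a0: "a0 \<in> T j" "?g a0 = Max (?g ` T j)" by auto
      have a0m: "?g b \<le> ?g a0" if "b \<in> T j" for b using a0(2) fin that by simp
      have "absF (w$j) \<le> \<Lambda> * absF (dotK w a0)"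
        unfolding wj
      proof (rule absF_sum_le)
        show "finite (T j)" by (rule Tr(1))
        show "0 \<le> \<Lambda> * absF (dotK w a0)" using Lpos absF_nonneg[of "dotK w a0"] by simp
        show "\<forall>i\<in>T j. absF (r j i * dotK w i) \<le> \<Lambda> * absF (dotK w a0)"
        proof
          fix i assume i: "i \<in> T j"
          have "absF (r j i * dotK w i) = absF (r j i) * absF (dotK w i)" by (rule absF_mult)
          also have "\<dots> \<le> \<Lambda> * absF (dotK w a0)"
            using rle[OF i] a0m[OF i] absF_nonneg[of "r j i"] absF_nonneg[of "dotK w i"] Lpos
            by (intro mult_mono) simp_all
          finally show "absF (r j i * dotK w i) \<le> \<Lambda> * absF (dotK w a0)" .
        qed
      qed
      moreover have "a0 \<in> E" using a0(1) Tr(2)[of j] by blast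
      ultimately show ?thesis by blast
    qed
  qed
  thus ?thesis using Lpos by blast
qed



theorem mainTheorem7:
  fixes U :: "(('k::{field,finite} fls) ^ 'd) set"
    and x0 :: "('k fls) ^ 'd"
    and f :: "('k fls) ^ 'd \<Rightarrow> ('k fls) ^ 'n"
    and \<theta> :: "('k fls) ^ 'd \<Rightarrow> 'k fls"
    and i1 :: 'n and j1 :: 'd
  assumes U_open: "openF U" and x0U: "x0 \<in> U"
    \<comment> \<open>(II)\<close>
    and II_an: "\<forall>i. analyticF U (\<lambda>x. f x $ i) \<and> analytic_to_boundary U (\<lambda>x. f x $ i)"
    and II_f1: "\<forall>x\<in>U. f x $ i1 = x $ j1"
    \<comment> \<open>(III)\<close>
    and III: "\<forall>W. openF W \<and> W \<noteq> {} \<and> W \<subseteq> U \<longrightarrow>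
               (\<forall>c0 (c :: ('k fls) ^ 'n). (\<forall>x\<in>W. c0 + (\<Sum>i\<in>UNIV. c $ i * f x $ i) = 0) \<longrightarrow> c0 = 0 \<and> c = 0)"
    \<comment> \<open>(IV)\<close>
    and IV_f: "\<forall>x\<in>U. normv (f x) \<le> 1"
    and IV_grad: "\<forall>x\<in>U. \<forall>i j. \<exists>D. has_partialF (\<lambda>y. f y $ i) j x D \<and> absF D \<le> 1"
    and IV_dq: "\<forall>\<beta>. (\<Sum>i\<in>UNIV. \<beta> i) = 2 \<longrightarrow> (\<forall>i. dq_bar_bounded U \<beta> (\<lambda>y. f y $ i))"
    \<comment> \<open>(VI)\<close>
    and VI_an: "analyticF U \<theta> \<and> analytic_to_boundary U \<theta>"
    and VI_th: "\<forall>x\<in>U. absF (\<theta> x) \<le> 1"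
    and VI_grad: "\<forall>x\<in>U. \<forall>j. \<exists>D. has_partialF \<theta> j x D \<and> absF D \<le> 1"
    and VI_dq: "\<forall>\<beta>. (\<Sum>i\<in>UNIV. \<beta> i) = 2 \<longrightarrow> dq_bar_bounded U \<beta> \<theta>"
  shows "\<exists>W. openF W \<and> x0 \<in> W \<and> W \<subseteq> U \<and>
           (\<forall>V. openF V \<and> x0 \<in> V \<and> V \<subseteq> W \<longrightarrow>
              (\<exists>M0>1. (INF p \<in> {(a :: ('k fls) ^ 'n, a0 :: 'k fls). normv a \<ge> M0}.
                         (SUP x\<in>V. absF (snd p + (\<Sum>i\<in>UNIV. fst p $ i * f x $ i) + \<theta> x))) > 0))"
proof -
  have "\<forall>V. openF V \<and> x0 \<in> V \<and> V \<subseteq> U \<longrightarrow>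
              (\<exists>M0>1. (INF p \<in> {(a :: ('k fls) ^ 'n, a0 :: 'k fls). normv a \<ge> M0}.
                         (SUP x\<in>V. absF (snd p + (\<Sum>i\<in>UNIV. fst p $ i * f x $ i) + \<theta> x))) > 0)"
  proof (intro allI impI)
    fix V assume V: "openF V \<and> x0 \<in> V \<and> V \<subseteq> U"
    define ev :: "'k fls ^ 'd \<Rightarrow> 'k fls ^ ('n option)" where
      "ev x = (\<chi> j. case j of None \<Rightarrow> 1 | Some i \<Rightarrow> f x $ i)" for x
    have dotK_ev: "dotK w (ev x) = w $ None + (\<Sum>i\<in>UNIV. w $ Some i * f x $ i)" for w x
    proof -
      have U: "(UNIV :: 'n option set) = insert None (Some ` UNIV)" by (rule UNIV_option_conv)
      have "dotK w (ev x) = (\<Sum>j\<in>insert None (Some ` UNIV). w $ j * ev x $ j)"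
        unfolding dotK_def U ..
      also have "\<dots> = w $ None * ev x $ None + (\<Sum>j\<in>Some ` UNIV. w $ j * ev x $ j)"
        by (rule sum.insert) auto
      also have "(\<Sum>j\<in>Some ` UNIV. w $ j * ev x $ j) = (\<Sum>i\<in>UNIV. w $ Some i * ev x $ Some i)"
        by (rule sum.reindex_cong[of Some]) auto
      finally show ?thesis unfolding ev_def by simp
    qed
    have H: "\<forall>w. (\<forall>v\<in>ev ` V. dotK w v = 0) \<longrightarrow> w = 0"
    proof (intro allI impI)
      fix w :: "'k fls ^ 'n option" assume A: "\<forall>v\<in>ev ` V. dotK w v = 0"
      define c :: "'k fls ^ 'n" where "c = (\<chi> i. w $ Some i)"
      have "\<forall>x\<in>V. w $ None + (\<Sum>i\<in>UNIV. c $ i * f x $ i) = 0"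
        using A unfolding c_def by (simp add: dotK_ev)
      moreover have "openF V \<and> V \<noteq> {} \<and> V \<subseteq> U" using V by auto
      ultimately have "w $ None = 0 \<and> c = 0" using III by blast
      hence "w $ j = 0" for j unfolding c_def by (cases j) (auto simp: vec_eq_iff)
      thus "w = 0" by (simp add: vec_eq_iff)
    qed
    have ne: "ev ` V \<noteq> {}" using V by auto
    obtain \<Lambda> where Lpos: "\<Lambda> > 0" and L: "\<forall>w j. \<exists>v\<in>ev ` V. absF (w$j) \<le> \<Lambda> * absF (dotK w v)"
      using coord_bound[OF H ne] by blast
    define M0 where "M0 = 2 * \<Lambda> + 2"
    let ?S = "{(a :: ('k fls) ^ 'n, a0 :: 'k fls). normv a \<ge> M0}"
    let ?\<phi> = "\<lambda>p x. absF (snd p + (\<Sum>i\<in>UNIV. fst p $ i * f x $ i) + \<theta> x)"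
    have big: "1 \<le> (SUP x\<in>V. ?\<phi> p x)" if p: "p \<in> ?S" for p
    proof -
      obtain a a0 where pa: "p = (a, a0)" by (cases p)
      have na: "normv a \<ge> M0" using p pa by simp
      obtain i where i: "normv a = absF (a $ i)" using normv_attained by blast
      define w :: "'k fls ^ 'n option" where "w = (\<chi> j. case j of None \<Rightarrow> a0 | Some i \<Rightarrow> a $ i)"
      obtain v where v: "v \<in> ev ` V" "absF (w $ Some i) \<le> \<Lambda> * absF (dotK w v)" using L by blast
      obtain x where x: "x \<in> V" "v = ev x" using v(1) by blast
      define D where "D = a0 + (\<Sum>i\<in>UNIV. a $ i * f x $ i)"
      have "dotK w v = D" unfolding x(2) dotK_ev D_def w_def by simp
      hence Dle: "normv a \<le> \<Lambda> * absF D" using v(2) i unfolding w_def by simp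
      have D1: "absF D > 1"
      proof (rule ccontr)
        assume "\<not> absF D > 1"
        hence "\<Lambda> * absF D \<le> \<Lambda> * 1" using Lpos by (intro mult_left_mono) auto
        thus False using Dle na Lpos unfolding M0_def by linarith
      qed
      have xU: "x \<in> U" using x(1) V by blast
      have th: "absF (\<theta> x) < absF D" using VI_th xU D1 by fastforce
      have phx: "?\<phi> p x = absF D" unfolding pa D_def using absF_add_strict[OF th[unfolded D_def]] by simp
      have bdd: "bdd_above (?\<phi> p ` V)"
      proof (rule bdd_aboveI2)
        fix y assume yV: "y \<in> V"
        hence yU: "y \<in> U" using V by blast
        have s: "absF (\<Sum>i\<in>UNIV. a $ i * f y $ i) \<le> normv a"
        proof (rule absF_sum_le)
          show "finite (UNIV :: 'n set)" by simp
          show "0 \<le> normv a" by (rule normv_nonneg)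
          show "\<forall>k\<in>UNIV. absF (a $ k * f y $ k) \<le> normv a"
          proof
            fix k :: 'n
            have fk: "absF (f y $ k) \<le> 1" using normv_ge[of "f y" k] IV_f yU by fastforce
            have "absF (a $ k * f y $ k) = absF (a $ k) * absF (f y $ k)" by (rule absF_mult)
            also have "\<dots> \<le> normv a * 1"
              using normv_ge[of a k] fk absF_nonneg[of "a $ k"] absF_nonneg[of "f y $ k"]
              by (intro mult_mono) (simp_all add: normv_nonneg)
            finally show "absF (a $ k * f y $ k) \<le> normv a" by simp
          qed
        qed
        have t: "absF (\<theta> y) \<le> 1" using VI_th yU by blast
        have "?\<phi> p y \<le> max (max (absF a0) (absF (\<Sum>i\<in>UNIV. a $ i * f y $ i))) (absF (\<theta> y))"
          unfolding pa using absF_add_le[of "a0 + (\<Sum>i\<in>UNIV. a $ i * f y $ i)" "\<theta> y"]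
            absF_add_le[of a0 "\<Sum>i\<in>UNIV. a $ i * f y $ i"] by simp
        also have "\<dots> \<le> absF a0 + normv a + 1"
          using s t absF_nonneg[of a0] normv_nonneg[of a] by simp
        finally show "?\<phi> p y \<le> absF a0 + normv a + 1" .
      qed
      have "?\<phi> p x \<le> (SUP x\<in>V. ?\<phi> p x)" by (rule cSUP_upper[OF x(1) bdd])
      thus ?thesis using phx D1 by simp
    qed
    obtain y :: "'k fls" where y: "absF y > M0" using absF_big by blast
    have Sne: "?S \<noteq> {}"
    proof -
      have "normv (\<chi> i. y :: ('k fls) ^ 'n) \<ge> M0"
        using normv_ge[of "\<chi> i. y :: ('k fls) ^ 'n" i1] y by simp
      thus ?thesis by blast
    qed
    have "1 \<le> (INF p \<in> ?S. (SUP x\<in>V. ?\<phi> p x))"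
      by (rule cINF_greatest[OF Sne big])
    hence "(INF p \<in> ?S. (SUP x\<in>V. ?\<phi> p x)) > 0" by simp
    moreover have "M0 > 1" unfolding M0_def using Lpos by simp
    ultimately show "\<exists>M0>1. (INF p \<in> {(a :: ('k fls) ^ 'n, a0 :: 'k fls). normv a \<ge> M0}.
                         (SUP x\<in>V. absF (snd p + (\<Sum>i\<in>UNIV. fst p $ i * f x $ i) + \<theta> x))) > 0"
      by blast
  qed
  thus ?thesis using U_open x0U by blast
qed


end
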